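(* Let $\Delta$ be a finite, flag, simply connected simplicial complex, with $\mathcal{P}_H$, $q$, $T$, $p_n$, $L$ and $\Phi_n$ as in the context, and let $K$ be a constant such that $\mathrm{Area}_{\mathcal{P}_H}\big(p_n(q,\iota e)\,e^n\,p_n(\tau e,q)\big)\le K|n|^2$ for all $e\in\mathrm{Edge}(\Delta)$ and $n\in\mathbb{Z}$. Let $e\cdot f\cdot g$ be a combinatorial 1-cycle in $\Delta$. Then for every $n\in\mathbb{Z}$, $\mathrm{Area}_{\mathcal{P}_H}\big(\Phi_n(e^{-1}f^{-1}g^{-1})\big)\le(3K+4)|n|^2+(6L+6)|n|+5$.
   Context: $\mathrm{Edge}(\Delta)$ is the set of directed edges of $\Delta$; for $e$ in it, $\iota e$, $\tau e$ are its initial and terminal vertices and $\overline{e}$ is the reversed edge. $e_1\cdot\ldots\cdot e_l$ is a combinatorial path if $\tau e_i=\iota e_{i+1}$, and a combinatorial 1-cycle if also $\tau e_l=\iota e_1$. $\mathcal{P}_H=\langle\mathrm{Edge}(\Delta)\mid\mathcal{R}_H\rangle$ where $\mathcal{R}_H$ consists of the words $e\overline{e}$ ($e\in\mathrm{Edge}(\Delta)$) and $efg$, $e^{-1}f^{-1}g^{-1}$ for every combinatorial 1-cycle $e\cdot f\cdot g$. $\mathrm{Area}_{\mathcal{P}_H}(w)$ is the least $m$ such that $w$ is freely equal to $\prod_{i=1}^m x_ir_ix_i^{-1}$ with $r_i\in\mathcal{R}_H^{\pm1}$. For a letter $e$ and $k\in\mathbb{Z}$, $e^k$ is the word of $k$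 copies of $e$ if $k\ge0$ and $|k|$ copies of $e^{-1}$ if $k<0$. Fix a vertex $q$ and a spanning tree $T$ of the 1-skeleton of $\Delta$; $p_n(u,v)=e_1^n\cdots e_l^n$ where $e_1\cdot\ldots\cdot e_l$ is the unique geodesic combinatorial path in $T$ from $u$ to $v$. $L$ is the maximum over vertices $u,v$ of their edge-path distance in $T$. $\Phi_n$ ($n\in\mathbb{Z}$) is the endomorphism of the free monoid on $\mathrm{Edge}(\Delta)^{\pm1}$ with $\Phi_n(e)=p_n(q,\iota e)\,e^{n+1}\,p_n(\tau e,q)$ and $\Phi_n(e^{-1})=\Phi_n(e)^{-1}$ (formal inverse word). *)

theory Defs
  imports "HOL-Analysis.Analysis" "HOL-Library.Extended_Real"
begin

definition simplicial_complex :: "'v set set \<Rightarrow> bool" where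
  "simplicial_complex D \<longleftrightarrow>
     (\<forall>s\<in>D. finite s \<and> s \<noteq> {}) \<and> (\<forall>s\<in>D. \<forall>t. t \<subseteq> s \<and> t \<noteq> {} \<longrightarrow> t \<in> D)"

definition vertices :: "'v set set \<Rightarrow> 'v set" where
  "vertices D = {v. {v} \<in> D}"

definition flag_complex :: "'v set set \<Rightarrow> bool" where
  "flag_complex D \<longleftrightarrow>
     (\<forall>s. finite s \<and> s \<noteq> {} \<and> s \<subseteq> vertices D \<and> (\<forall>u\<in>s. \<forall>v\<in>s. u \<noteq> v \<longrightarrow> {u, v} \<in> D)
          \<longrightarrow> s \<in> D)"

definition realization :: "('v::finite) set set \<Rightarrow> (real ^ 'v) set" where
  "realization D = (\<Union>s\<in>D. convex hull ((\<lambda>v. axis v (1::real)) ` s))"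

type_synonym 'v edge = "'v \<times> 'v"

definition Edge :: "'v set set \<Rightarrow> 'v edge set" where
  "Edge D = {(u, v). u \<noteq> v \<and> {u, v} \<in> D}"

abbreviation iota :: "'v edge \<Rightarrow> 'v" where "iota e \<equiv> fst e"
abbreviation tau :: "'v edge \<Rightarrow> 'v" where "tau e \<equiv> snd e"

definition rev_edge :: "'v edge \<Rightarrow> 'v edge" where
  "rev_edge e = (snd e, fst e)"

fun cpath :: "'v edge set \<Rightarrow> 'v \<Rightarrow> 'v edge list \<Rightarrow> 'v \<Rightarrow> bool" where
  "cpath E u [] v \<longleftrightarrow> u = v"
| "cpath E u (e # es) v \<longleftrightarrow> e \<in> E \<and> fst e = u \<and> cpath E (snd e) es v"

definition comb_1cycle3 :: "'v set set \<Rightarrow> 'v edge \<Rightarrow> 'v edge \<Rightarrow> 'v edge \<Rightarrow> bool" where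
  "comb_1cycle3 D e f g \<longleftrightarrow> e \<in> Edge D \<and> f \<in> Edge D \<and> g \<in> Edge D \<and>
      tau e = iota f \<and> tau f = iota g \<and> tau g = iota e"

text \<open>T is a set of directed edges closed under reversal (each undirected tree
edge appears with both orientations).  A spanning tree is connected on all
vertices and has no simple cycle.\<close>
definition spanning_tree :: "'v set set \<Rightarrow> 'v edge set \<Rightarrow> bool" where
  "spanning_tree D T \<longleftrightarrow>
     T \<subseteq> Edge D \<and> (\<forall>e\<in>T. rev_edge e \<in> T) \<and>
     (\<forall>u\<in>vertices D. \<forall>v\<in>vertices D. \<exists>es. cpath T u es v) \<and>
     \<not> (\<exists>vs. length vs \<ge> 3 \<and> distinct vs \<and>
            (\<forall>i < length vs. (vs ! i, vs ! ((i + 1) mod length vs)) \<in> T))"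

definition geodesic_tree_path :: "'v edge set \<Rightarrow> 'v \<Rightarrow> 'v \<Rightarrow> 'v edge list \<Rightarrow> bool" where
  "geodesic_tree_path T u v es \<longleftrightarrow>
     cpath T u es v \<and> (\<forall>es'. cpath T u es' v \<longrightarrow> length es \<le> length es')"

definition tree_path :: "'v edge set \<Rightarrow> 'v \<Rightarrow> 'v \<Rightarrow> 'v edge list" where
  "tree_path T u v = (THE es. geodesic_tree_path T u v es)"

definition tree_diam :: "'v set set \<Rightarrow> 'v edge set \<Rightarrow> nat" where
  "tree_diam D T = Max {length (tree_path T u v) | u v. u \<in> vertices D \<and> v \<in> vertices D}"

text \<open>A letter is (e, False) for e and (e, True) for e^{-1}.\<close>
type_synonym 'v letter = "'v edge \<times> bool"
type_synonym 'v word = "'v letter list"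

definition inv_letter :: "'v letter \<Rightarrow> 'v letter" where
  "inv_letter a = (fst a, \<not> snd a)"

definition inv_word :: "'v word \<Rightarrow> 'v word" where
  "inv_word w = rev (map inv_letter w)"

definition epow :: "'v edge \<Rightarrow> int \<Rightarrow> 'v word" where
  "epow e k = (if 0 \<le> k then replicate (nat k) (e, False) else replicate (nat (- k)) (e, True))"

inductive free_red1 :: "'v word \<Rightarrow> 'v word \<Rightarrow> bool" where
  "free_red1 (u @ [a, inv_letter a] @ v) (u @ v)"

definition free_eq :: "'v word \<Rightarrow> 'v word \<Rightarrow> bool" where
  "free_eq = equivclp free_red1"

definition relators_H :: "'v set set \<Rightarrow> 'v word set" where
  "relators_H D =
     {[(e, False), (rev_edge e, False)] | e. e \<in> Edge D} \<union>
     {[(e, False), (f, False), (g, False)] | e f g. comb_1cycle3 D e f g} \<union>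
     {[(e, True), (f, True), (g, True)] | e f g. comb_1cycle3 D e f g}"

definition relators_pm :: "'v set set \<Rightarrow> 'v word set" where
  "relators_pm D = relators_H D \<union> inv_word ` relators_H D"

definition prod_conj :: "('v word \<times> 'v word) list \<Rightarrow> 'v word" where
  "prod_conj ps = concat (map (\<lambda>(x, r). x @ r @ inv_word x) ps)"

text \<open>Area (infinite if w is not null-homotopic, i.e. the infimum of the empty set).\<close>
definition Area :: "'v set set \<Rightarrow> 'v word \<Rightarrow> enat" where
  "Area D w = Inf {enat (length ps) | ps.
      (\<forall>(x, r) \<in> set ps. set x \<subseteq> Edge D \<times> UNIV \<and> r \<in> relators_pm D) \<and> free_eq w (prod_conj ps)}"

definition p_n :: "'v edge set \<Rightarrow> int \<Rightarrow> 'v \<Rightarrow> 'v \<Rightarrow> 'v word" where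
  "p_n T n u v = concat (map (\<lambda>e. epow e n) (tree_path T u v))"

definition Phi_edge :: "'v edge set \<Rightarrow> 'v \<Rightarrow> int \<Rightarrow> 'v edge \<Rightarrow> 'v word" where
  "Phi_edge T q n e = p_n T n q (iota e) @ epow e (n + 1) @ p_n T n (tau e) q"

definition Phi :: "'v edge set \<Rightarrow> 'v \<Rightarrow> int \<Rightarrow> 'v word \<Rightarrow> 'v word" where
  "Phi T q n w = concat (map (\<lambda>a. if snd a then inv_word (Phi_edge T q n (fst a))
                                  else Phi_edge T q n (fst a)) w)"

end

theory Submission
  imports Defs
begin
lemma free_eq_refl[simp]: "free_eq w w"
  by (simp add: free_eq_def reflpD)

lemma free_eq_sym: "free_eq u v \<Longrightarrow> free_eq v u"
  unfolding free_eq_def by (rule equivclp_sym)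

lemma free_eq_trans: "free_eq u v \<Longrightarrow> free_eq v w \<Longrightarrow> free_eq u w"
  unfolding free_eq_def by (meson transpD transp_equivclp)

lemma free_eq_red: "free_eq (u @ [a, inv_letter a] @ v) (u @ v)"
  unfolding free_eq_def by (rule r_into_equivclp) (rule free_red1.intros)

lemma free_red1_ctx: "free_red1 u v \<Longrightarrow> free_red1 (x @ u @ y) (x @ v @ y)"
proof (induction rule: free_red1.induct)
  case (1 u a v)
  show ?case using free_red1.intros[of "x @ u" a "v @ y"] by simp
qed

lemma free_eq_ctx: "free_eq u v \<Longrightarrow> free_eq (x @ u @ y) (x @ v @ y)"
  unfolding free_eq_def
proof (induction rule: equivclp_induct)
  case base then show ?case by (simp add: reflpD)
next
  case (step y' z)
  then have "equivclp free_red1 (x @ y' @ y) (x @ z @ y)"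
    by (meson free_red1_ctx equivclp_sym r_into_equivclp)
  with step show ?case by (meson transpD transp_equivclp)
qed

lemma free_eq_app: "free_eq u u' \<Longrightarrow> free_eq v v' \<Longrightarrow> free_eq (u @ v) (u' @ v')"
  using free_eq_ctx[of u u' "[]" v] free_eq_ctx[of v v' u' "[]"] free_eq_trans by auto

lemma inv_letter_inv[simp]: "inv_letter (inv_letter a) = a"
  by (simp add: inv_letter_def)

lemma inv_word_inv[simp]: "inv_word (inv_word w) = w"
  by (simp add: inv_word_def rev_map comp_def)

lemma inv_word_append[simp]: "inv_word (u @ v) = inv_word v @ inv_word u"
  by (simp add: inv_word_def)

lemma inv_word_Nil[simp]: "inv_word [] = []" by (simp add: inv_word_def)
lemma inv_word_Cons[simp]: "inv_word (a # w) = inv_word w @ [inv_letter a]" by (simp add: inv_word_def)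

lemma free_eq_cancel: "free_eq (w @ inv_word w) []"
proof (induction w)
  case Nil then show ?case by simp
next
  case (Cons a w)
  have "free_eq ([a] @ (w @ inv_word w) @ [inv_letter a]) ([a] @ [] @ [inv_letter a])"
    by (rule free_eq_ctx[OF Cons])
  moreover have "free_eq ([] @ [a, inv_letter a] @ []) ([] @ [])" by (rule free_eq_red)
  ultimately show ?case using free_eq_trans by fastforce
qed

lemma free_eq_cancel': "free_eq (inv_word w @ w) []"
  using free_eq_cancel[of "inv_word w"] by simp

lemma free_red1_inv: "free_red1 u v \<Longrightarrow> free_eq (inv_word u) (inv_word v)"
proof (induction rule: free_red1.induct)
  case (1 u a v)
  show ?case using free_eq_red[of "inv_word v" a "inv_word u"] by simp
qed

lemma free_eq_inv: "free_eq u v \<Longrightarrow> free_eq (inv_word u) (inv_word v)"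
  unfolding free_eq_def
proof (induction rule: equivclp_induct)
  case base then show ?case by (simp add: reflpD)
next
  case (step y z)
  then have "equivclp free_red1 (inv_word y) (inv_word z)"
    using free_red1_inv[unfolded free_eq_def] by (meson equivclp_sym)
  with step show ?case by (meson transpD transp_equivclp)
qed

definition valid :: "'v set set \<Rightarrow> ('v word \<times> 'v word) list \<Rightarrow> bool" where
  "valid D ps \<longleftrightarrow> (\<forall>(x, r) \<in> set ps. set x \<subseteq> Edge D \<times> UNIV \<and> r \<in> relators_pm D)"

definition nul :: "'v set set \<Rightarrow> nat \<Rightarrow> 'v word \<Rightarrow> bool" where
  "nul D k w \<longleftrightarrow> (\<exists>ps. valid D ps \<and> length ps \<le> k \<and> free_eq w (prod_conj ps))"

definition lw :: "'v set set \<Rightarrow> 'v word \<Rightarrow> bool" where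
  "lw D w \<longleftrightarrow> set w \<subseteq> Edge D \<times> UNIV"

definition rw :: "'v set set \<Rightarrow> nat \<Rightarrow> 'v word \<Rightarrow> 'v word \<Rightarrow> bool" where
  "rw D k u v \<longleftrightarrow> lw D u \<and> lw D v \<and> nul D k (u @ inv_word v)"

lemma lw_append[simp]: "lw D (u @ v) \<longleftrightarrow> lw D u \<and> lw D v"
  by (auto simp: lw_def)
lemma lw_Nil[simp]: "lw D []" by (simp add: lw_def)
lemma lw_Cons[simp]: "lw D (a # w) \<longleftrightarrow> fst a \<in> Edge D \<and> lw D w"
  by (cases a) (auto simp: lw_def)
lemma lw_inv[simp]: "lw D (inv_word w) \<longleftrightarrow> lw D w"
  by (auto simp: lw_def inv_word_def inv_letter_def)

lemma prod_conj_append[simp]: "prod_conj (ps @ qs) = prod_conj ps @ prod_conj qs"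
  by (simp add: prod_conj_def)
lemma prod_conj_Nil[simp]: "prod_conj [] = []" by (simp add: prod_conj_def)
lemma prod_conj_Cons[simp]: "prod_conj ((x, r) # ps) = x @ r @ inv_word x @ prod_conj ps"
  by (simp add: prod_conj_def)

lemma valid_append[simp]: "valid D (ps @ qs) \<longleftrightarrow> valid D ps \<and> valid D qs"
  by (auto simp: valid_def)

lemma nul_0[simp]: "nul D 0 []"
  unfolding nul_def by (rule exI[of _ "[]"]) (simp add: valid_def)

lemma nul_free: "nul D k w \<Longrightarrow> free_eq w' w \<Longrightarrow> nul D k w'"
  unfolding nul_def using free_eq_trans by blast

lemma nul_mono: "nul D k w \<Longrightarrow> k \<le> k' \<Longrightarrow> nul D k' w"
  unfolding nul_def by auto

lemma nul_app: "nul D k1 u \<Longrightarrow> nul D k2 v \<Longrightarrow> nul D (k1 + k2) (u @ v)"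
  unfolding nul_def
proof (elim exE conjE)
  fix ps qs assume "valid D ps" "length ps \<le> k1" "free_eq u (prod_conj ps)"
    "valid D qs" "length qs \<le> k2" "free_eq v (prod_conj qs)"
  then show "\<exists>ps. valid D ps \<and> length ps \<le> k1 + k2 \<and> free_eq (u @ v) (prod_conj ps)"
    by (intro exI[of _ "ps @ qs"]) (auto intro: free_eq_app)
qed

lemma nul_rel: "r \<in> relators_pm D \<Longrightarrow> nul D 1 r"
  unfolding nul_def by (rule exI[of _ "[([], r)]"]) (simp add: valid_def)

lemma relators_pm_inv: "r \<in> relators_pm D \<Longrightarrow> inv_word r \<in> relators_pm D"
  unfolding relators_pm_def by (auto intro: image_eqI[of _ inv_word, OF inv_word_inv[symmetric]])

lemma prod_conj_inv: "inv_word (prod_conj ps) = prod_conj (rev (map (\<lambda>(x, r). (x, inv_word r)) ps))"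
  by (induction ps) auto

lemma nul_inv: "nul D k w \<Longrightarrow> nul D k (inv_word w)"
  unfolding nul_def
proof (elim exE conjE)
  fix ps assume "valid D ps" "length ps \<le> k" "free_eq w (prod_conj ps)"
  then show "\<exists>ps. valid D ps \<and> length ps \<le> k \<and> free_eq (inv_word w) (prod_conj ps)"
    by (intro exI[of _ "rev (map (\<lambda>(x, r). (x, inv_word r)) ps)"])
       (auto simp: valid_def relators_pm_inv prod_conj_inv[symmetric] intro: free_eq_inv)
qed

lemma prod_conj_conj:
  "free_eq (x @ prod_conj ps @ inv_word x) (prod_conj (map (\<lambda>(y, r). (x @ y, r)) ps))"
proof (induction ps)
  case Nil then show ?case using free_eq_cancel by simp
next
  case (Cons p ps)
  obtain y r where p: "p = (y, r)" by fastforce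
  have "free_eq ((x @ y @ r @ inv_word y) @ [] @ (prod_conj ps @ inv_word x))
                ((x @ y @ r @ inv_word y) @ (inv_word x @ x) @ (prod_conj ps @ inv_word x))"
    using free_eq_ctx[OF free_eq_sym[OF free_eq_cancel'[of x]]] by blast
  moreover have "free_eq ((x @ y @ r @ inv_word y @ inv_word x) @ (x @ prod_conj ps @ inv_word x))
      ((x @ y @ r @ inv_word y @ inv_word x) @ prod_conj (map (\<lambda>(y, r). (x @ y, r)) ps))"
    using free_eq_app[OF free_eq_refl Cons] by blast
  ultimately show ?case using p by (auto intro: free_eq_trans)
qed

lemma nul_conj: "nul D k w \<Longrightarrow> lw D x \<Longrightarrow> nul D k (x @ w @ inv_word x)"
  unfolding nul_def
proof (elim exE conjE)
  fix ps assume "valid D ps" "length ps \<le> k" "free_eq w (prod_conj ps)" "lw D x"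
  moreover have "valid D (map (\<lambda>(y, r). (x @ y, r)) ps)"
    using \<open>valid D ps\<close> \<open>lw D x\<close> unfolding valid_def lw_def by fastforce
  ultimately show "\<exists>ps. valid D ps \<and> length ps \<le> k \<and> free_eq (x @ w @ inv_word x) (prod_conj ps)"
    by (intro exI[of _ "map (\<lambda>(y, r). (x @ y, r)) ps"])
       (auto intro!: free_eq_trans[OF _ prod_conj_conj] free_eq_ctx)
qed

lemma nul_cyc: "nul D k (u @ v) \<Longrightarrow> lw D u \<Longrightarrow> nul D k (v @ u)"
proof -
  assume a: "nul D k (u @ v)" "lw D u"
  then have "nul D k (inv_word u @ (u @ v) @ inv_word (inv_word u))"
    by (intro nul_conj) auto
  moreover have "free_eq (v @ u) (inv_word u @ (u @ v) @ inv_word (inv_word u))"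
    using free_eq_ctx[OF free_eq_sym[OF free_eq_cancel'[of u]], of "[]" "v @ u"] by simp
  ultimately show ?thesis using nul_free by blast
qed

lemma rw_nil: "rw D k u [] \<longleftrightarrow> lw D u \<and> nul D k u"
  by (simp add: rw_def)

lemma rw_of_nul: "nul D k (u @ w) \<Longrightarrow> lw D u \<Longrightarrow> lw D w \<Longrightarrow> rw D k u (inv_word w)"
  by (simp add: rw_def)

lemma rw_free: "lw D u \<Longrightarrow> lw D v \<Longrightarrow> free_eq u v \<Longrightarrow> rw D 0 u v"
  unfolding rw_def using free_eq_app[of u v "inv_word v" "inv_word v"] free_eq_cancel[of v]
  by (auto intro: nul_free[OF nul_0] free_eq_trans)

lemma rw_refl: "lw D u \<Longrightarrow> rw D 0 u u"
  by (simp add: rw_free)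

lemma rw_mono: "rw D k u v \<Longrightarrow> k \<le> k' \<Longrightarrow> rw D k' u v"
  unfolding rw_def using nul_mono by blast

lemma rw_trans: "rw D k1 u v \<Longrightarrow> rw D k2 v w \<Longrightarrow> rw D (k1 + k2) u w"
  unfolding rw_def
proof (elim conjE, intro conjI)
  assume "nul D k1 (u @ inv_word v)" "nul D k2 (v @ inv_word w)" 
  then have "nul D (k1 + k2) ((u @ inv_word v) @ (v @ inv_word w))" by (rule nul_app)
  moreover have "free_eq (u @ [] @ inv_word w) (u @ (inv_word v @ v) @ inv_word w)"
    by (rule free_eq_ctx[OF free_eq_sym[OF free_eq_cancel']])
  ultimately show "nul D (k1 + k2) (u @ inv_word w)" by (auto intro: nul_free)
qed

lemma rw_sym: "rw D k u v \<Longrightarrow> rw D k v u"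
  unfolding rw_def using nul_inv by fastforce

lemma rw_ctx: "rw D k u v \<Longrightarrow> lw D x \<Longrightarrow> lw D y \<Longrightarrow> rw D k (x @ u @ y) (x @ v @ y)"
  unfolding rw_def
proof (elim conjE, intro conjI)
  assume "nul D k (u @ inv_word v)" "lw D x"
  then have "nul D k (x @ (u @ inv_word v) @ inv_word x)" by (rule nul_conj)
  moreover have "free_eq (x @ u @ (y @ inv_word y) @ inv_word v @ inv_word x) (x @ u @ [] @ inv_word v @ inv_word x)"
    using free_eq_ctx[OF free_eq_cancel[of y], of "x @ u" "inv_word v @ inv_word x"] by simp
  ultimately show "nul D k ((x @ u @ y) @ inv_word (x @ v @ y))" by (auto intro: nul_free)
qed (auto)

lemma rw_app: "rw D k1 u u' \<Longrightarrow> rw D k2 v v' \<Longrightarrow> rw D (k1 + k2) (u @ v) (u' @ v')"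
proof -
  assume a: "rw D k1 u u'" "rw D k2 v v'"
  then have l: "lw D u" "lw D u'" "lw D v" "lw D v'" by (auto simp: rw_def)
  have "rw D k1 (u @ v) (u' @ v)" using rw_ctx[OF a(1), of "[]" v] l by simp
  moreover have "rw D k2 (u' @ v) (u' @ v')" using rw_ctx[OF a(2), of u' "[]"] l by simp
  ultimately show ?thesis by (rule rw_trans)
qed

lemma rw_inv: "rw D k u v \<Longrightarrow> rw D k (inv_word u) (inv_word v)"
  unfolding rw_def
proof (elim conjE, intro conjI)
  assume "nul D k (u @ inv_word v)" "lw D u"
  then have "nul D k (inv_word v @ u)" by (rule nul_cyc)
  then have "nul D k (inv_word (inv_word v @ u))" by (rule nul_inv)
  then show "nul D k (inv_word u @ inv_word (inv_word v))" by simp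
qed auto

lemma rw_free_trans: "rw D k u v \<Longrightarrow> free_eq v w \<Longrightarrow> lw D w \<Longrightarrow> rw D k u w"
  using rw_trans[of D k u v 0 w] rw_free[of D v w] by (auto simp: rw_def)

lemma free_rw_trans: "free_eq u v \<Longrightarrow> lw D u \<Longrightarrow> rw D k v w \<Longrightarrow> rw D k u w"
  using rw_trans[of D 0 u v k w] rw_free[of D u v] by (auto simp: rw_def)

definition tri :: "'v set set \<Rightarrow> 'v edge \<Rightarrow> 'v edge \<Rightarrow> 'v edge \<Rightarrow> bool" where
  "tri D x y z \<longleftrightarrow> x \<in> Edge D \<and> y \<in> Edge D \<and> z \<in> Edge D \<and>
    (\<forall>s. [(x,s),(y,s),(z,s)] \<in> relators_pm D \<and> [(y,s),(z,s),(x,s)] \<in> relators_pm D \<and>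
         [(z,s),(x,s),(y,s)] \<in> relators_pm D \<and> [(x,s),(z,s),(y,s)] \<in> relators_pm D \<and>
         [(z,s),(y,s),(x,s)] \<in> relators_pm D \<and> [(y,s),(x,s),(z,s)] \<in> relators_pm D)"

lemma tri_rot: "tri D x y z \<Longrightarrow> tri D y z x" unfolding tri_def by blast
lemma tri_swap: "tri D x y z \<Longrightarrow> tri D y x z" unfolding tri_def by blast

lemma comb_rot: "comb_1cycle3 D e f g \<Longrightarrow> comb_1cycle3 D f g e"
  unfolding comb_1cycle3_def by auto

lemma cyc_rels:
  assumes "comb_1cycle3 D e f g"
  shows "[(e,False),(f,False),(g,False)] \<in> relators_pm D" "[(e,True),(f,True),(g,True)] \<in> relators_pm D"
    "[(g,False),(f,False),(e,False)] \<in> relators_pm D" "[(g,True),(f,True),(e,True)] \<in> relators_pm D"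
proof -
  show 1: "[(e,False),(f,False),(g,False)] \<in> relators_pm D" 
    using assms unfolding relators_pm_def relators_H_def by blast
  show 2: "[(e,True),(f,True),(g,True)] \<in> relators_pm D" 
    using assms unfolding relators_pm_def relators_H_def by blast
  show "[(g,False),(f,False),(e,False)] \<in> relators_pm D"
    using relators_pm_inv[OF 2] by (simp add: inv_letter_def)
  show "[(g,True),(f,True),(e,True)] \<in> relators_pm D"
    using relators_pm_inv[OF 1] by (simp add: inv_letter_def)
qed

lemma tri_of_cycle: "comb_1cycle3 D e f g \<Longrightarrow> tri D e f g"
proof -
  assume c: "comb_1cycle3 D e f g"
  have c2: "comb_1cycle3 D f g e" and c3: "comb_1cycle3 D g e f" using c comb_rot by blast+
  have E: "e \<in> Edge D" "f \<in> Edge D" "g \<in> Edge D" using c by (auto simp: comb_1cycle3_def)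
  show ?thesis unfolding tri_def
  proof (intro conjI E allI)
    fix s :: bool
    show "[(e,s),(f,s),(g,s)] \<in> relators_pm D" using cyc_rels[OF c] by (cases s) auto
    show "[(f,s),(g,s),(e,s)] \<in> relators_pm D" using cyc_rels[OF c2] by (cases s) auto
    show "[(g,s),(e,s),(f,s)] \<in> relators_pm D" using cyc_rels[OF c3] by (cases s) auto
    show "[(e,s),(g,s),(f,s)] \<in> relators_pm D" using cyc_rels[OF c2] by (cases s) auto
    show "[(g,s),(f,s),(e,s)] \<in> relators_pm D" using cyc_rels[OF c] by (cases s) auto
    show "[(f,s),(e,s),(g,s)] \<in> relators_pm D" using cyc_rels[OF c3] by (cases s) auto
  qed
qed

lemma rw_free_both: "rw D k u v \<Longrightarrow> free_eq u' u \<Longrightarrow> free_eq v v' \<Longrightarrow> lw D u' \<Longrightarrow> lw D v' \<Longrightarrow> rw D k u' v'"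
  using rw_free_trans free_rw_trans by metis

lemma tri_pair: "tri D x y z \<Longrightarrow> rw D 1 [(x,s),(y,s)] [(z, \<not> s)]"
proof -
  assume t: "tri D x y z"
  then have "[(x,s),(y,s),(z,s)] \<in> relators_pm D" by (simp add: tri_def)
  then have "nul D 1 ([(x,s),(y,s)] @ [(z,s)])" using nul_rel by fastforce
  then have "rw D 1 [(x,s),(y,s)] (inv_word [(z,s)])" using t by (intro rw_of_nul) (auto simp: tri_def)
  then show ?thesis by (simp add: inv_letter_def)
qed

lemma comm_same: "tri D x y z \<Longrightarrow> rw D 2 [(x,s),(y,s)] [(y,s),(x,s)]"
proof -
  assume t: "tri D x y z"
  have "rw D (1+1) [(x,s),(y,s)] [(y,s),(x,s)]"
    by (rule rw_trans[OF tri_pair[OF t] rw_sym[OF tri_pair[OF tri_swap[OF t]]]])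
  then show ?thesis by (simp add: numeral_2_eq_2)
qed

lemma comm: "tri D x y z \<Longrightarrow> rw D 2 [(x,s),(y,t)] [(y,t),(x,s)]"
proof (cases "s = t")
  case True
  assume "tri D x y z" then show ?thesis using comm_same True by blast
next
  case False
  assume t: "tri D x y z"
  then have E: "x \<in> Edge D" "y \<in> Edge D" by (auto simp: tri_def)
  have "rw D 2 [(y,t),(x,t)] [(x,t),(y,t)]" using comm_same[OF tri_swap[OF t]] by blast
  then have r: "rw D 2 ([(x,s)] @ [(y,t),(x,t)] @ [(x,s)]) ([(x,s)] @ [(x,t),(y,t)] @ [(x,s)])"
    using E by (intro rw_ctx) auto
  have f1: "free_eq [(x,s),(y,t)] ([(x,s)] @ [(y,t),(x,t)] @ [(x,s)])"
    using free_eq_sym[OF free_eq_red[of "[(x,s),(y,t)]" "(x,t)" "[]"]] False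
    by (simp add: inv_letter_def)
  have f2: "free_eq ([(x,s)] @ [(x,t),(y,t)] @ [(x,s)]) [(y,t),(x,s)]"
    using free_eq_red[of "[]" "(x,s)" "[(y,t),(x,s)]"] False
    by (simp add: inv_letter_def)
  show ?thesis using rw_free_both[OF r f1 f2] E by simp
qed

lemma lw_replicate[simp]: "lw D (replicate j a) \<longleftrightarrow> j = 0 \<or> fst a \<in> Edge D"
  by (auto simp: lw_def)

lemma pass_rep: "rw D 2 [a,b] [b,a] \<Longrightarrow> rw D (2*j) ([a] @ replicate j b) (replicate j b @ [a])"
proof (induction j)
  case 0
  then have "lw D [a]" by (simp add: rw_def)
  then show ?case by (simp add: rw_refl)
next
  case (Suc j)
  have l: "lw D [a]" "lw D [b]" using Suc.prems by (auto simp: rw_def)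
  have "rw D 2 ([] @ [a,b] @ replicate j b) ([] @ [b,a] @ replicate j b)"
    using rw_ctx[OF Suc.prems, of "[]" "replicate j b"] l by simp
  moreover have "rw D (2*j) ([b] @ ([a] @ replicate j b) @ []) ([b] @ (replicate j b @ [a]) @ [])"
    using rw_ctx[OF Suc.IH[OF Suc.prems], of "[b]" "[]"] l by simp
  ultimately have "rw D (2 + 2*j) ([a,b] @ replicate j b) ([b] @ replicate j b @ [a])"
    using rw_trans by fastforce
  then show ?case by simp
qed

lemma epow_rep: "epow x k = replicate (nat \<bar>k\<bar>) (x, k < 0)"
  by (simp add: epow_def)

lemma lw_epow[simp]: "lw D (epow x k) \<longleftrightarrow> x \<in> Edge D \<or> k = 0"
  by (auto simp: epow_rep lw_def)

lemma inv_epow[simp]: "inv_word (epow x k) = epow x (-k)"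
  by (auto simp: epow_def inv_word_def inv_letter_def)

lemma pass_epow: "tri D x y z \<Longrightarrow> rw D (2 * nat \<bar>k\<bar>) ([(x,s)] @ epow y k) (epow y k @ [(x,s)])"
  unfolding epow_rep by (rule pass_rep[OF comm])

lemma tri_rep: "tri D x y z \<Longrightarrow> rw D (j*j) (replicate j (x,s) @ replicate j (y,s) @ replicate j (z,s)) []"
proof (induction j)
  case 0 then show ?case by (auto simp: rw_def)
next
  case (Suc j)
  note t = Suc.prems
  have E: "x \<in> Edge D" "y \<in> Edge D" "z \<in> Edge D" using t by (auto simp: tri_def)
  let ?X = "replicate j (x,s)" and ?Y = "replicate j (y,s)" and ?Z = "replicate j (z,s)"
  have r1: "rw D 1 ((x,s) # ?X @ ?Y @ [(y,s),(z,s)] @ ?Z) ((x,s) # ?X @ ?Y @ (x, \<not>s) # ?Z)"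
    using rw_ctx[OF tri_pair[OF tri_rot[OF t], of s], of "(x,s) # ?X @ ?Y" ?Z] E
    by simp
  have r2: "rw D (2*j) ((x,s) # ?X @ ?Y @ (x, \<not>s) # ?Z) ((x,s) # ?X @ (x, \<not>s) # ?Y @ ?Z)"
    using rw_ctx[OF rw_sym[OF pass_rep[OF comm[OF t]]], of "(x,s) # ?X" ?Z]
      E by simp
  have f: "free_eq ((x,s) # ?X @ (x, \<not>s) # ?Y @ ?Z) (?X @ ?Y @ ?Z)"
  proof -
    have "(x,s) # ?X @ (x, \<not>s) # ?Y @ ?Z = ?X @ [(x,s), inv_letter (x,s)] @ (?Y @ ?Z)"
      by (simp add: inv_letter_def replicate_append_same[symmetric])
    then show ?thesis using free_eq_red by metis
  qed
  have "rw D (1 + 2*j + j*j) ((x,s) # ?X @ ?Y @ [(y,s),(z,s)] @ ?Z) []"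
    using rw_trans[OF rw_trans[OF r1 r2] free_rw_trans[OF f _ Suc.IH[OF t]]] E
    by simp
  moreover have "replicate (Suc j) (x,s) @ replicate (Suc j) (y,s) @ replicate (Suc j) (z,s)
      = (x,s) # ?X @ ?Y @ [(y,s),(z,s)] @ ?Z"
    by (simp add: replicate_append_same[symmetric])
  ultimately show ?case by (simp add: algebra_simps mult_2_right)
qed

lemma tri_epow: "tri D x y z \<Longrightarrow> rw D (nat \<bar>k\<bar> * nat \<bar>k\<bar>) (epow x k @ epow y k @ epow z k) []"
  unfolding epow_rep by (rule tri_rep)

lemma epow_pred: "free_eq (epow z (k-1)) (epow z k @ [(z,True)])"
proof (cases "k > 0")
  case True
  have n: "nat k = Suc (nat (k-1))" using True by simp
  have "epow z k = replicate (nat (k-1)) (z,False) @ [(z,False)]"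
    using True unfolding epow_def n by (simp add: replicate_append_same)
  then have e: "epow z k @ [(z,True)] = epow z (k-1) @ [(z,False), inv_letter (z,False)] @ []"
    using True by (simp add: epow_def inv_letter_def)
  show ?thesis unfolding e using free_eq_sym[OF free_eq_red[of "epow z (k-1)" "(z,False)" "[]"]] by simp
next
  case False
  have n: "nat (-(k-1)) = Suc (nat (-k))" using False by simp
  have "epow z (k-1) = epow z k @ [(z,True)]"
    using False unfolding epow_def n by (simp add: replicate_append_same)
  then show ?thesis by simp
qed

lemma epow_pred': "free_eq ([(z,True)] @ epow z k) (epow z (k-1))"
proof (cases "k > 0")
  case True
  have n: "nat k = Suc (nat (k-1))" using True by simp
  have e: "[(z,True)] @ epow z k = [] @ [(z,True), inv_letter (z,True)] @ epow z (k-1)"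
    using True unfolding epow_def n by (simp add: inv_letter_def)
  show ?thesis unfolding e using free_eq_red[of "[]" "(z,True)" "epow z (k-1)"] by simp
next
  case False
  have n: "nat (-(k-1)) = Suc (nat (-k))" using False by simp
  have "epow z (k-1) = [(z,True)] @ epow z k"
    using False unfolding epow_def n by simp
  then show ?thesis by simp
qed

lemma rw_ctx': "rw D k u v \<Longrightarrow> lw D x \<Longrightarrow> lw D y \<Longrightarrow> a = x @ u @ y \<Longrightarrow> b = x @ v @ y \<Longrightarrow> rw D k a b"
  using rw_ctx by blast

lemma rw_free': "free_eq u v \<Longrightarrow> lw D x \<Longrightarrow> lw D y \<Longrightarrow> lw D u \<Longrightarrow> lw D v \<Longrightarrow> a = x @ u @ y \<Longrightarrow> b = x @ v @ y \<Longrightarrow> rw D 0 a b"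
  using rw_free free_eq_ctx by (metis lw_append)

lemma core:
  assumes t: "tri D x y z" and M: "M = N - 1"
  shows "rw D (nat \<bar>N\<bar> * nat \<bar>N\<bar> + nat \<bar>M\<bar> * nat \<bar>M\<bar> + 2 * nat \<bar>N\<bar> + 2 * nat \<bar>M\<bar>)
     (epow x M @ epow y N @ epow z M @ epow x N @ epow y M @ epow z N) []"
proof -
  have E: "x \<in> Edge D" "y \<in> Edge D" "z \<in> Edge D" using t by (auto simp: tri_def)
  let ?Z = "(z,True)"
  have t1: "tri D y z x" using tri_rot[OF t] .
  have t2: "tri D z x y" using tri_rot[OF t1] .
  have t3: "tri D z y x" using tri_rot[OF tri_rot[OF tri_swap[OF t]]] .
  have A: "rw D 0 (epow y N @ epow z M @ epow x N @ epow y M @ epow z N @ epow x M)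
     (epow y N @ epow z N @ ?Z # epow x N @ epow y M @ epow z N @ epow x M)"
    by (rule rw_free'[OF epow_pred[of z N], of D "epow y N" "epow x N @ epow y M @ epow z N @ epow x M"])
       (use E M in auto)
  have B: "rw D (2 * nat \<bar>N\<bar>) (epow y N @ epow z N @ ?Z # epow x N @ epow y M @ epow z N @ epow x M)
     (epow y N @ epow z N @ epow x N @ ?Z # epow y M @ epow z N @ epow x M)"
    by (rule rw_ctx'[OF pass_epow[OF t2, where s=True and k=N], of "epow y N @ epow z N" "epow y M @ epow z N @ epow x M"])
       (use E in auto)
  have C: "rw D (2 * nat \<bar>M\<bar>) (epow y N @ epow z N @ epow x N @ ?Z # epow y M @ epow z N @ epow x M)
     (epow y N @ epow z N @ epow x N @ epow y M @ ?Z # epow z N @ epow x M)"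
    by (rule rw_ctx'[OF pass_epow[OF t3, where s=True and k=M], of "epow y N @ epow z N @ epow x N" "epow z N @ epow x M"])
       (use E in auto)
  have F: "rw D 0 (epow y N @ epow z N @ epow x N @ epow y M @ ?Z # epow z N @ epow x M)
     ((epow y N @ epow z N @ epow x N) @ (epow y M @ epow z M @ epow x M))"
    by (rule rw_free'[OF epow_pred'[of z N], of D "epow y N @ epow z N @ epow x N @ epow y M" "epow x M"])
       (use E M in auto)
  have G: "rw D (nat \<bar>N\<bar> * nat \<bar>N\<bar> + nat \<bar>M\<bar> * nat \<bar>M\<bar>)
     ((epow y N @ epow z N @ epow x N) @ (epow y M @ epow z M @ epow x M)) ([] @ [])"
    by (rule rw_app[OF tri_epow[OF t1] tri_epow[OF t1]])
  have "rw D (0 + 2 * nat \<bar>N\<bar> + 2 * nat \<bar>M\<bar> + 0 + (nat \<bar>N\<bar> * nat \<bar>N\<bar> + nat \<bar>M\<bar> * nat \<bar>M\<bar>))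
      ((epow y N @ epow z M @ epow x N @ epow y M @ epow z N) @ epow x M) []"
    using rw_trans[OF rw_trans[OF rw_trans[OF rw_trans[OF A B] C] F] G] by simp
  then have "nul D (nat \<bar>N\<bar> * nat \<bar>N\<bar> + nat \<bar>M\<bar> * nat \<bar>M\<bar> + 2 * nat \<bar>N\<bar> + 2 * nat \<bar>M\<bar>)
      ((epow y N @ epow z M @ epow x N @ epow y M @ epow z N) @ epow x M)"
    by (simp add: rw_nil algebra_simps)
  then have "nul D (nat \<bar>N\<bar> * nat \<bar>N\<bar> + nat \<bar>M\<bar> * nat \<bar>M\<bar> + 2 * nat \<bar>N\<bar> + 2 * nat \<bar>M\<bar>)
      (epow x M @ (epow y N @ epow z M @ epow x N @ epow y M @ epow z N))"
    by (rule nul_cyc) (use E in simp)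
  then show ?thesis using E by (simp add: rw_nil)
qed

lemma pair_rep: "rw D 1 [a,b] [] \<Longrightarrow> rw D j (replicate j a @ replicate j b) []"
proof (induction j)
  case 0 then show ?case by (simp add: rw_def)
next
  case (Suc j)
  have l: "lw D [a]" "lw D [b]" using Suc.prems by (auto simp: rw_def)
  have "rw D 1 (replicate (Suc j) a @ replicate (Suc j) b) (replicate j a @ replicate j b)"
    by (rule rw_ctx'[OF Suc.prems, of "replicate j a" "replicate j b"])
       (use l in \<open>auto simp: replicate_append_same[symmetric]\<close>)
  from rw_trans[OF this Suc.IH[OF Suc.prems]] show ?case by simp
qed

lemma rev_edge_Edge: "p \<in> Edge D \<Longrightarrow> rev_edge p \<in> Edge D"
  by (cases p) (auto simp: Edge_def rev_edge_def insert_commute)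

lemma rev_edge_rev_edge[simp]: "rev_edge (rev_edge p) = p"
  by (simp add: rev_edge_def)

lemma edge_pair: "p \<in> Edge D \<Longrightarrow> rw D 1 [(p,s),(rev_edge p,s)] []"
proof -
  assume p: "p \<in> Edge D"
  have r: "[(q,False),(rev_edge q,False)] \<in> relators_pm D" if "q \<in> Edge D" for q
    using that unfolding relators_pm_def relators_H_def by blast
  have rel: "[(p,s),(rev_edge p,s)] \<in> relators_pm D"
  proof (cases s)
    case True
    have "inv_word [(rev_edge p,False),(rev_edge (rev_edge p),False)] \<in> relators_pm D"
      by (rule relators_pm_inv[OF r[OF rev_edge_Edge[OF p]]])
    then show ?thesis using True by (simp add: inv_letter_def)
  qed (use r[OF p] in simp)
  show ?thesis unfolding rw_nil using nul_rel[OF rel] p rev_edge_Edge[OF p] by simp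
qed

lemma epow_pair: "p \<in> Edge D \<Longrightarrow> rw D (nat \<bar>n\<bar>) (epow p n @ epow (rev_edge p) n) []"
  unfolding epow_rep by (rule pair_rep[OF edge_pair])

lemma junction: "set ps \<subseteq> Edge D \<Longrightarrow>
  rw D (length ps * nat \<bar>n\<bar>) (concat (map (\<lambda>e. epow e n) ps) @ concat (map (\<lambda>e. epow e n) (rev (map rev_edge ps)))) []"
proof (induction ps)
  case Nil then show ?case by (simp add: rw_def)
next
  case (Cons p ps)
  have p: "p \<in> Edge D" "rev_edge p \<in> Edge D" using Cons.prems rev_edge_Edge[of p D] by auto
  have "rw D (length ps * nat \<bar>n\<bar>) (concat (map (\<lambda>e. epow e n) (p # ps)) @ concat (map (\<lambda>e. epow e n) (rev (map rev_edge (p # ps)))))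
     (epow p n @ [] @ epow (rev_edge p) n)"
    by (rule rw_ctx'[OF Cons.IH, of "epow p n" "epow (rev_edge p) n"]) (use Cons.prems p in auto)
  from rw_trans[OF this] epow_pair[OF p(1), of n] show ?case by (simp add: algebra_simps)
qed

lemma loop:
  assumes X: "nul D kx (A @ epow x n @ B)" and J1: "nul D j1 (A' @ A)" and J2: "nul D j2 (B' @ B)"
    and l: "lw D A" "lw D B" "lw D A'" "lw D B'" "x \<in> Edge D"
  shows "rw D (kx + j1 + j2) (inv_word B' @ inv_word A') (epow x (-n))"
proof -
  have "nul D kx ((epow x n @ B) @ A)" by (rule nul_cyc) (use X l in simp_all)
  then have r1: "rw D kx (epow x n) (inv_word A @ inv_word B)"
    using rw_of_nul[of D kx "epow x n" "B @ A"] l by simp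
  have r2: "rw D j1 (inv_word A) A'" using rw_sym[OF rw_of_nul[OF J1]] l by simp
  have r3: "rw D j2 (inv_word B) B'" using rw_sym[OF rw_of_nul[OF J2]] l by simp
  have "rw D (kx + (j1 + j2)) (epow x n) (A' @ B')" by (rule rw_trans[OF r1 rw_app[OF r2 r3]])
  from rw_sym[OF rw_inv[OF this]] show ?thesis by (simp add: algebra_simps)
qed

fun walk :: "'v edge set \<Rightarrow> 'v list \<Rightarrow> bool" where
  "walk T [] = True"
| "walk T [x] = True"
| "walk T (x # y # r) = ((x, y) \<in> T \<and> walk T (y # r))"

lemma walk_append: "walk T (xs @ ys) \<longleftrightarrow> walk T xs \<and> walk T ys \<and> (xs \<noteq> [] \<and> ys \<noteq> [] \<longrightarrow> (last xs, hd ys) \<in> T)"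
proof (induction xs)
  case Nil then show ?case by simp
next
  case (Cons x xs)
  show ?case
  proof (cases xs)
    case Nil then show ?thesis by (cases ys) auto
  next
    case (Cons y r) then show ?thesis using Cons.IH by auto
  qed
qed

lemma walk_prefix: "walk T (xs @ ys) \<Longrightarrow> walk T xs" by (simp add: walk_append)
lemma walk_suffix: "walk T (xs @ ys) \<Longrightarrow> walk T ys" by (simp add: walk_append)

lemma walk_Cons: "walk T (x # xs) \<longleftrightarrow> walk T xs \<and> (xs \<noteq> [] \<longrightarrow> (x, hd xs) \<in> T)"
  by (cases xs) auto

lemma walk_rev: "\<forall>e\<in>T. rev_edge e \<in> T \<Longrightarrow> walk T xs \<Longrightarrow> walk T (rev xs)"
proof (induction xs)
  case Nil then show ?case by simp
next
  case (Cons x xs)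
  then show ?case
    by (cases xs) (auto simp: walk_append walk_Cons rev_edge_def last_rev hd_rev)
qed

lemma walk_join: "walk T (a @ [c]) \<Longrightarrow> walk T (c # b) \<Longrightarrow> walk T (a @ c # b)"
  using walk_append[of T "a @ [c]" b] by (cases b) (auto simp: walk_Cons)

lemma walk_nth: "walk T zs \<Longrightarrow> Suc i < length zs \<Longrightarrow> (zs ! i, zs ! Suc i) \<in> T"
proof (induction zs arbitrary: i rule: walk.induct)
  case (3 T x y r)
  then show ?case by (cases i) auto
qed auto

lemma cpath_walk: "cpath T u es v \<Longrightarrow> walk T (u # map snd es) \<and> last (u # map snd es) = v"
proof (induction es arbitrary: u)
  case Nil then show ?case by simp
next
  case (Cons e es)
  then have "walk T (snd e # map snd es)" "last (snd e # map snd es) = v" "e \<in> T" "fst e = u" by auto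
  then show ?case by (cases e) (auto simp: walk_Cons)
qed

lemma cpath_zip: "cpath T u es v \<Longrightarrow> es = zip (u # map snd es) (map snd es)"
proof (induction es arbitrary: u)
  case Nil then show ?case by simp
next
  case (Cons e es)
  then show ?case by (cases e) auto
qed

lemma walk_cpath: "walk T (u # zs) \<Longrightarrow> cpath T u (zip (u # zs) zs) (last (u # zs))"
proof (induction zs arbitrary: u)
  case Nil then show ?case by simp
next
  case (Cons z zs)
  then show ?case by auto
qed

lemma cpath_append: "cpath T u (es1 @ es2) w \<longleftrightarrow> (\<exists>v. cpath T u es1 v \<and> cpath T v es2 w)"
  by (induction es1 arbitrary: u) auto

lemma cpath_rev: "\<forall>e\<in>T. rev_edge e \<in> T \<Longrightarrow> cpath T u es v \<Longrightarrow> cpath T v (rev (map rev_edge es)) u"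
proof (induction es arbitrary: u)
  case Nil then show ?case by simp
next
  case (Cons e es)
  then show ?case by (cases e) (auto simp: cpath_append rev_edge_def)
qed

lemma cpath_set: "cpath T u es v \<Longrightarrow> set es \<subseteq> T"
  by (induction es arbitrary: u) auto

lemma geodesic_distinct:
  assumes g: "geodesic_tree_path T u v es"
  shows "distinct (u # map snd es)"
proof (rule ccontr)
  let ?zs = "u # map snd es"
  assume "\<not> distinct ?zs"
  then obtain a x b c where d: "?zs = a @ [x] @ b @ [x] @ c" using not_distinct_decomp by blast
  have c: "cpath T u es v" using g by (simp add: geodesic_tree_path_def)
  have w: "walk T ?zs" and lst: "last ?zs = v" using cpath_walk[OF c] by auto
  have w1: "walk T (a @ [x])" using walk_prefix[of T "a @ [x]" "b @ [x] @ c"] w d by simp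
  have w2: "walk T (x # c)" using walk_suffix[of T "a @ [x] @ b" "x # c"] w d by simp
  have wz: "walk T (a @ x # c)" by (rule walk_join[OF w1 w2])
  have hd: "hd (a @ x # c) = u" using d by (cases a) auto
  have lt: "last (a @ x # c) = v" using d lst by (cases c) auto
  obtain r where r: "a @ x # c = u # r" using hd by (cases "a @ x # c") auto
  have "cpath T u (zip (u # r) r) v" using walk_cpath[of T u r] wz lt r by simp
  then have "length es \<le> length (zip (u # r) r)" using g unfolding geodesic_tree_path_def by blast
  moreover have "length (a @ x # c) < length ?zs" using d by simp
  ultimately show False using r by simp
qed

lemma distinct_hd_last: "distinct ys \<Longrightarrow> length ys \<ge> 2 \<Longrightarrow> hd ys \<noteq> last ys"
  by (cases ys) (auto simp: last_in_set)

definition no_cycle :: "'v edge set \<Rightarrow> bool" where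
  "no_cycle T \<longleftrightarrow> \<not> (\<exists>vs. length vs \<ge> 3 \<and> distinct vs \<and>
            (\<forall>i < length vs. (vs ! i, vs ! ((i + 1) mod length vs)) \<in> T))"

lemma cyc_idx:
  assumes "walk T (vs @ [hd vs])" "vs \<noteq> []"
  shows "\<forall>i < length vs. (vs ! i, vs ! ((i + 1) mod length vs)) \<in> T"
proof (intro allI impI)
  fix i assume i: "i < length vs"
  have "((vs @ [hd vs]) ! i, (vs @ [hd vs]) ! Suc i) \<in> T" using walk_nth[OF assms(1)] i by simp
  moreover have "(vs @ [hd vs]) ! i = vs ! i" using i by (simp add: nth_append)
  moreover have "(vs @ [hd vs]) ! Suc i = vs ! ((i + 1) mod length vs)"
  proof (cases "Suc i < length vs")
    case True then show ?thesis by (simp add: nth_append)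
  next
    case False
    then have "Suc i = length vs" using i by simp
    then show ?thesis using assms(2) by (simp add: nth_append hd_conv_nth)
  qed
  ultimately show "(vs ! i, vs ! ((i + 1) mod length vs)) \<in> T" by simp
qed

lemma walk_unique:
  assumes nc: "no_cycle T" and sym: "\<forall>e\<in>T. rev_edge e \<in> T"
  shows "walk T xs \<Longrightarrow> walk T ys \<Longrightarrow> distinct xs \<Longrightarrow> distinct ys \<Longrightarrow> xs \<noteq> [] \<Longrightarrow> ys \<noteq> []
    \<Longrightarrow> hd xs = hd ys \<Longrightarrow> last xs = last ys \<Longrightarrow> xs = ys"
proof (induction xs arbitrary: ys)
  case Nil then show ?case by simp
next
  case (Cons u xs')
  obtain ys' where ys: "ys = u # ys'" using Cons.prems by (cases ys) auto
  show ?case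
  proof (cases "xs' = []")
    case True
    then have lu: "last ys = u" using Cons.prems by simp
    have "ys' = []"
    proof (rule ccontr)
      assume ne: "ys' \<noteq> []"
      then have "last ys' \<in> set ys'" by simp
      moreover have "last ys' = u" using lu ys ne by simp
      moreover have "u \<notin> set ys'" using Cons.prems ys by simp
      ultimately show False by simp
    qed
    then show ?thesis using ys True by simp
  next
    case xne: False
    show ?thesis
    proof (cases "ys' = []")
      case True
      then have "last xs' = u" using Cons.prems ys xne by simp
      moreover have "last xs' \<in> set xs'" using xne by simp
      moreover have "u \<notin> set xs'" using Cons.prems by simp
      ultimately show ?thesis by simp
    next
      case yne: False
      show ?thesis
      proof (cases "hd xs' = hd ys'")
        case True
        have "xs' = ys'"
          by (rule Cons.IH) (use Cons.prems ys xne yne True in \<open>auto simp: walk_Cons\<close>)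
        then show ?thesis using ys by simp
      next
        case hne: False
        have "last xs' \<in> set ys'" using Cons.prems ys xne yne by (simp add: last_in_set)
        then have "\<exists>z\<in>set xs'. z \<in> set ys'" using xne last_in_set by blast
        then obtain as c bs where xs': "xs' = as @ c # bs" and cy: "c \<in> set ys'"
            and asn: "\<forall>y\<in>set as. y \<notin> set ys'"
          using split_list_first_prop[of xs' "\<lambda>z. z \<in> set ys'"] by blast
        obtain cs ds where ys': "ys' = cs @ c # ds" using split_list[OF cy] by blast
        let ?vs = "u # as @ c # rev cs"
        have dx: "distinct (u # as @ c # bs)" using Cons.prems xs' by simp
        have dy: "distinct (u # cs @ c # ds)" using Cons.prems ys ys' by simp
        have "set as \<inter> set cs = {}" using asn ys' by auto
        then have dist: "distinct ?vs" using dx dy by auto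
        have len: "length ?vs \<ge> 3"
        proof (rule ccontr)
          assume "\<not> length ?vs \<ge> 3"
          then have "as = []" "cs = []" by (simp_all add: not_le)
          then show False using hne xs' ys' by simp
        qed
        have wx: "walk T ((u # as @ [c]) @ bs)" using Cons.prems xs' by simp
        have wy: "walk T ((u # cs @ [c]) @ ds)" using Cons.prems ys ys' by simp
        have w1: "walk T ((u # as) @ [c])" using walk_prefix[OF wx] by simp
        have "walk T (u # cs @ [c])" using walk_prefix[OF wy] by simp
        then have "walk T (rev (u # cs @ [c]))" by (rule walk_rev[OF sym])
        then have w2: "walk T (c # rev cs @ [u])" by simp
        have "walk T ((u # as) @ c # rev cs @ [u])" by (rule walk_join[OF w1 w2])
        then have "walk T (?vs @ [hd ?vs])" by simp
        then have cyc: "\<forall>i < length ?vs. (?vs ! i, ?vs ! ((i + 1) mod length ?vs)) \<in> T"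
          by (rule cyc_idx) simp
        have False using nc dist len cyc unfolding no_cycle_def by blast
        then show ?thesis ..
      qed
    qed
  qed
qed

lemma st_sym: "spanning_tree D T \<Longrightarrow> \<forall>e\<in>T. rev_edge e \<in> T"
  by (simp add: spanning_tree_def)

lemma st_nc: "spanning_tree D T \<Longrightarrow> no_cycle T"
  by (simp add: spanning_tree_def no_cycle_def)

lemma geo_unique:
  assumes st: "spanning_tree D T" and g1: "geodesic_tree_path T u v es" and g2: "geodesic_tree_path T u v es'"
  shows "es = es'"
proof -
  have c1: "cpath T u es v" and c2: "cpath T u es' v" using g1 g2 by (auto simp: geodesic_tree_path_def)
  have w1: "walk T (u # map snd es)" "last (u # map snd es) = v" using cpath_walk[OF c1] by auto
  have w2: "walk T (u # map snd es')" "last (u # map snd es') = v" using cpath_walk[OF c2] by auto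
  have "u # map snd es = u # map snd es'"
    by (rule walk_unique[OF st_nc[OF st] st_sym[OF st] w1(1) w2(1) geodesic_distinct[OF g1] geodesic_distinct[OF g2]])
       (use w1 w2 in simp_all)
  then show ?thesis using cpath_zip[OF c1] cpath_zip[OF c2] by simp
qed

lemma geo_exists:
  assumes st: "spanning_tree D T" and "u \<in> vertices D" "v \<in> vertices D"
  shows "\<exists>es. geodesic_tree_path T u v es"
proof -
  have "\<exists>es. cpath T u es v" using st assms unfolding spanning_tree_def by blast
  then obtain es0 where "cpath T u es0 v" by blast
  then obtain es where "cpath T u es v" "\<forall>es'. cpath T u es' v \<longrightarrow> length es \<le> length es'"
    using ex_has_least_nat[of "\<lambda>es. cpath T u es v" es0 length] by blast
  then show ?thesis by (auto simp: geodesic_tree_path_def)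
qed

lemma tree_path_geo:
  assumes st: "spanning_tree D T" and "u \<in> vertices D" "v \<in> vertices D"
  shows "geodesic_tree_path T u v (tree_path T u v)"
proof -
  have "\<exists>!es. geodesic_tree_path T u v es" using geo_exists[OF assms] geo_unique[OF st] by blast
  then show ?thesis unfolding tree_path_def by (rule theI')
qed

lemma tree_path_cpath:
  "spanning_tree D T \<Longrightarrow> u \<in> vertices D \<Longrightarrow> v \<in> vertices D \<Longrightarrow> cpath T u (tree_path T u v) v"
  using tree_path_geo[of D T u v] by (auto simp: geodesic_tree_path_def)

lemma tree_path_rev:
  assumes st: "spanning_tree D T" and u: "u \<in> vertices D" and v: "v \<in> vertices D"
  shows "tree_path T v u = rev (map rev_edge (tree_path T u v))"
proof -
  let ?es = "tree_path T u v"
  have g: "geodesic_tree_path T u v ?es" by (rule tree_path_geo[OF st u v])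
  have "geodesic_tree_path T v u (rev (map rev_edge ?es))"
    unfolding geodesic_tree_path_def
  proof (intro conjI allI impI)
    show "cpath T v (rev (map rev_edge ?es)) u"
      using cpath_rev[OF st_sym[OF st]] g by (auto simp: geodesic_tree_path_def)
    fix es' assume "cpath T v es' u"
    then have "cpath T u (rev (map rev_edge es')) v" by (rule cpath_rev[OF st_sym[OF st]])
    then have "length ?es \<le> length (rev (map rev_edge es'))" using g by (auto simp: geodesic_tree_path_def)
    then show "length (rev (map rev_edge ?es)) \<le> length es'" by simp
  qed
  then show ?thesis using geo_unique[OF st tree_path_geo[OF st v u]] by blast
qed

lemma tree_path_len:
  assumes "u \<in> vertices D" "v \<in> vertices D"
  shows "length (tree_path T u v) \<le> tree_diam (D :: (('v::finite) set set)) T"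
proof -
  have "finite {length (tree_path T u v) | u v. u \<in> vertices (D :: ('v::finite) set set) \<and> v \<in> vertices D}"
    by (rule finite_image_set2) auto
  then show ?thesis unfolding tree_diam_def using assms by (intro Max_ge) auto
qed

lemma nul_area: "nul D k w \<Longrightarrow> Area D w \<le> enat k"
  unfolding nul_def Area_def
proof (elim exE conjE)
  fix ps assume "valid D ps" "length ps \<le> k" "free_eq w (prod_conj ps)"
  then have "enat (length ps) \<in> {enat (length ps) | ps.
      (\<forall>(x, r) \<in> set ps. set x \<subseteq> Edge D \<times> UNIV \<and> r \<in> relators_pm D) \<and> free_eq w (prod_conj ps)}"
    unfolding valid_def by blast
  then have "Inf {enat (length ps) | ps.
      (\<forall>(x, r) \<in> set ps. set x \<subseteq> Edge D \<times> UNIV \<and> r \<in> relators_pm D) \<and> free_eq w (prod_conj ps)} \<le> enat (length ps)"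
    by (rule Inf_lower)
  also have "\<dots> \<le> enat k" using \<open>length ps \<le> k\<close> by simp
  finally show "Inf {enat (length ps) | ps.
      (\<forall>(x, r) \<in> set ps. set x \<subseteq> Edge D \<times> UNIV \<and> r \<in> relators_pm D) \<and> free_eq w (prod_conj ps)} \<le> enat k" .
qed

lemma area_nul:
  assumes "ereal_of_enat (Area D w) \<le> ereal r"
  shows "\<exists>k. nul D k w \<and> real k \<le> r"
proof -
  let ?S = "{enat (length ps) | ps.
      (\<forall>(x, r) \<in> set ps. set x \<subseteq> Edge D \<times> UNIV \<and> r \<in> relators_pm D) \<and> free_eq w (prod_conj ps)}"
  have A: "Area D w = Inf ?S" by (simp add: Area_def)
  have "Area D w \<noteq> \<infinity>"
  proof
    assume "Area D w = \<infinity>" then show False using assms by simp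
  qed
  have ne: "?S \<noteq> {}"
  proof
    assume e: "?S = {}"
    have "Area D w = Inf {}" unfolding A by (simp only: e)
    then have "Area D w = \<infinity>" by (simp add: top_enat_def)
    then show False using \<open>Area D w \<noteq> \<infinity>\<close> by simp
  qed
  have "\<exists>x. x \<in> ?S" using ne by blast
  then have L: "(LEAST x. x \<in> ?S) \<in> ?S" by (rule LeastI_ex)
  have "Inf ?S = (LEAST x. x \<in> ?S)" using ne unfolding Inf_enat_def by (rule if_not_P)
  then have "Area D w \<in> ?S" using L A by simp
  then obtain ps where ps: "Area D w = enat (length ps)" "valid D ps" "free_eq w (prod_conj ps)"
    unfolding valid_def by blast
  have "nul D (length ps) w" using ps unfolding nul_def by blast
  moreover have "real (length ps) \<le> r" using assms ps(1) by simp
  ultimately show ?thesis by blast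
qed

lemma lw_concat_epow: "set ps \<subseteq> Edge D \<Longrightarrow> lw D (concat (map (\<lambda>e. epow e n) ps))"
  by (induction ps) auto

lemma vert_of_edge:
  assumes sc: "simplicial_complex D" and e: "(a, b) \<in> Edge D"
  shows "a \<in> vertices D" "b \<in> vertices D"
proof -
  have ab: "{a, b} \<in> D" using e unfolding Edge_def by blast
  have cl: "\<And>s t. s \<in> D \<Longrightarrow> t \<subseteq> s \<Longrightarrow> t \<noteq> {} \<Longrightarrow> t \<in> D"
    using sc unfolding simplicial_complex_def by blast
  have "{a} \<in> D" by (rule cl[OF ab]) simp_all
  moreover have "{b} \<in> D" by (rule cl[OF ab]) simp_all
  ultimately show "a \<in> vertices D" "b \<in> vertices D" unfolding vertices_def by simp_all
qed

context
  fixes D :: "('v::finite) set set" and T :: "'v edge set" and q :: 'v and n :: int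
  assumes st: "spanning_tree D T" and qv: "q \<in> vertices D"
begin

lemma lwP: "x \<in> vertices D \<Longrightarrow> y \<in> vertices D \<Longrightarrow> lw D (p_n T n x y)"
  unfolding p_n_def
  using cpath_set[OF tree_path_cpath[OF st]] st unfolding spanning_tree_def
  by (intro lw_concat_epow) blast

lemma tpE: "x \<in> vertices D \<Longrightarrow> y \<in> vertices D \<Longrightarrow> set (tree_path T x y) \<subseteq> Edge D"
  using cpath_set[OF tree_path_cpath[OF st]] st unfolding spanning_tree_def by blast

lemma JA: "x \<in> vertices D \<Longrightarrow> nul D (tree_diam D T * nat \<bar>n\<bar>) (p_n T n x q @ p_n T n q x)"
proof -
  assume x: "x \<in> vertices D"
  have "rw D (length (tree_path T x q) * nat \<bar>n\<bar>) (p_n T n x q @ p_n T n q x) []"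
    using junction[OF tpE[OF x qv], of n] tree_path_rev[OF st x qv] unfolding p_n_def by simp
  then show ?thesis using tree_path_len[OF x qv, of T] by (auto simp: rw_nil intro: nul_mono)
qed

lemma JB: "x \<in> vertices D \<Longrightarrow> nul D (tree_diam D T * nat \<bar>n\<bar>) (p_n T n q x @ p_n T n x q)"
proof -
  assume x: "x \<in> vertices D"
  have "rw D (length (tree_path T q x) * nat \<bar>n\<bar>) (p_n T n q x @ p_n T n x q) []"
    using junction[OF tpE[OF qv x], of n] tree_path_rev[OF st qv x] unfolding p_n_def by simp
  then show ?thesis using tree_path_len[OF qv x, of T] by (auto simp: rw_nil intro: nul_mono)
qed

lemma loopP:
  assumes X: "nul D kx (p_n T n q s @ epow (s,t) n @ p_n T n t q)"
    and sv: "s \<in> vertices D" and tv: "t \<in> vertices D" and E: "(s,t) \<in> Edge D"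
  shows "rw D (kx + tree_diam D T * nat \<bar>n\<bar> + tree_diam D T * nat \<bar>n\<bar>)
     (inv_word (p_n T n q t) @ inv_word (p_n T n s q)) (epow (s,t) (-n))"
  by (rule loop[OF X JA[OF sv] JB[OF tv] lwP[OF qv sv] lwP[OF tv qv] lwP[OF sv qv] lwP[OF qv tv] E])

end

theorem lemma4p8:
  fixes D :: "('v::finite) set set" and T :: "'v edge set" and q :: 'v and K :: real
    and e f g :: "'v edge" and n :: int
  assumes "simplicial_complex D"
    and "flag_complex D"
    and "simply_connected (realization D)"
    and "q \<in> vertices D"
    and "spanning_tree D T"
    and "\<forall>e'\<in>Edge D. \<forall>m::int.
           ereal_of_enat (Area D (p_n T m q (iota e') @ epow e' m @ p_n T m (tau e') q))
             \<le> ereal (K * \<bar>real_of_int m\<bar>^2)"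
    and "comb_1cycle3 D e f g"
  shows "ereal_of_enat (Area D (Phi T q n [(e, True), (f, True), (g, True)]))
           \<le> ereal ((3 * K + 4) * \<bar>real_of_int n\<bar>^2
                   + (6 * real (tree_diam D T) + 6) * \<bar>real_of_int n\<bar> + 5)"
proof -
  note sc = assms(1) and qv = assms(4) and st = assms(5) and H = assms(6) and cyc = assms(7)
  define a where "a = fst e"
  define b where "b = snd e"
  define c where "c = snd f"
  have ee: "e = (a, b)" by (simp add: a_def b_def)
  have ff: "f = (b, c)" using cyc by (simp add: b_def c_def comb_1cycle3_def prod_eq_iff)
  have gg: "g = (c, a)" using cyc by (simp add: a_def c_def comb_1cycle3_def prod_eq_iff)
  have E: "e \<in> Edge D" "f \<in> Edge D" "g \<in> Edge D" using cyc by (auto simp: comb_1cycle3_def)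
  have av: "a \<in> vertices D" and bv: "b \<in> vertices D" using vert_of_edge[OF sc, of a b] E ee by auto
  have cv: "c \<in> vertices D" using vert_of_edge[OF sc, of b c] E ff by auto
  let ?P = "p_n T n"
  let ?Lj = "tree_diam D T * nat \<bar>n\<bar>"
  obtain ke where ke: "nul D ke (?P q a @ epow e n @ ?P b q)" "real ke \<le> K * \<bar>real_of_int n\<bar>^2"
    using area_nul[of D "?P q a @ epow e n @ ?P b q"] H E ee by fastforce
  obtain kf where kf: "nul D kf (?P q b @ epow f n @ ?P c q)" "real kf \<le> K * \<bar>real_of_int n\<bar>^2"
    using area_nul[of D "?P q b @ epow f n @ ?P c q"] H E ff by fastforce
  obtain kg where kg: "nul D kg (?P q c @ epow g n @ ?P a q)" "real kg \<le> K * \<bar>real_of_int n\<bar>^2"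
    using area_nul[of D "?P q c @ epow g n @ ?P a q"] H E gg by fastforce
  have Le: "rw D (ke + ?Lj + ?Lj) (inv_word (?P q b) @ inv_word (?P a q)) (epow e (-n))"
    using loopP[OF st qv, where n=n and kx=ke and s=a and t=b] ke(1) av bv E ee by simp
  have Lf: "rw D (kf + ?Lj + ?Lj) (inv_word (?P q c) @ inv_word (?P b q)) (epow f (-n))"
    using loopP[OF st qv, where n=n and kx=kf and s=b and t=c] kf(1) bv cv E ff by simp
  have Lg: "rw D (kg + ?Lj + ?Lj) (inv_word (?P q a) @ inv_word (?P c q)) (epow g (-n))"
    using loopP[OF st qv, where n=n and kx=kg and s=c and t=a] kg(1) cv av E gg by simp
  have t: "tri D e g f" using tri_rot[OF tri_swap[OF tri_of_cycle[OF cyc]]] .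
  define M where "M = - (n + 1)"
  define N where "N = - n"
  let ?C = "nat \<bar>N\<bar> * nat \<bar>N\<bar> + nat \<bar>M\<bar> * nat \<bar>M\<bar> + 2 * nat \<bar>N\<bar> + 2 * nat \<bar>M\<bar>"
  have C: "rw D ?C (epow e M @ epow g N @ epow f M @ epow e N @ epow g M @ epow f N) []"
    by (rule core[OF t]) (simp add: M_def N_def)
  have lE: "lw D (epow e M)" "lw D (epow f M)" "lw D (epow g M)" using E by auto
  have R: "rw D (0 + ((kg + ?Lj + ?Lj) + (0 + ((ke + ?Lj + ?Lj) + (0 + (kf + ?Lj + ?Lj))))))
    (epow e M @ (inv_word (?P q a) @ inv_word (?P c q)) @ epow f M @ (inv_word (?P q b) @ inv_word (?P a q))
      @ epow g M @ (inv_word (?P q c) @ inv_word (?P b q)))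
    (epow e M @ epow g N @ epow f M @ epow e N @ epow g M @ epow f N)"
    unfolding N_def
    by (intro rw_app rw_refl lE Le Lf Lg)
  define tot where "tot = (kg + ?Lj + ?Lj) + (ke + ?Lj + ?Lj) + (kf + ?Lj + ?Lj) + ?C"
  have "rw D tot
    ((epow e M @ inv_word (?P q a) @ inv_word (?P c q) @ epow f M @ inv_word (?P q b) @ inv_word (?P a q)
      @ epow g M @ inv_word (?P q c)) @ inv_word (?P b q)) []"
    using rw_trans[OF R C] unfolding tot_def by (simp add: algebra_simps)
  then have "nul D tot
    ((epow e M @ inv_word (?P q a) @ inv_word (?P c q) @ epow f M @ inv_word (?P q b) @ inv_word (?P a q)
      @ epow g M @ inv_word (?P q c)) @ inv_word (?P b q))" and lwR:
    "lw D (epow e M @ inv_word (?P q a) @ inv_word (?P c q) @ epow f M @ inv_word (?P q b) @ inv_word (?P a q)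
      @ epow g M @ inv_word (?P q c))"
    by (auto simp: rw_nil)
  then have "nul D tot
    (inv_word (?P b q) @ (epow e M @ inv_word (?P q a) @ inv_word (?P c q) @ epow f M @ inv_word (?P q b) @ inv_word (?P a q)
      @ epow g M @ inv_word (?P q c)))"
    by (rule nul_cyc)
  moreover have "Phi T q n [(e, True), (f, True), (g, True)] =
    inv_word (?P b q) @ (epow e M @ inv_word (?P q a) @ inv_word (?P c q) @ epow f M @ inv_word (?P q b) @ inv_word (?P a q)
      @ epow g M @ inv_word (?P q c))"
    by (simp add: Phi_def Phi_edge_def ee ff gg M_def)
  ultimately have "Area D (Phi T q n [(e, True), (f, True), (g, True)]) \<le> enat tot"
    using nul_area by metis
  then have A: "ereal_of_enat (Area D (Phi T q n [(e, True), (f, True), (g, True)])) \<le> ereal (real tot)"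
    using ereal_of_enat_le_iff[of _ "enat tot"] by simp
  define x where "x = \<bar>real_of_int n\<bar>"
  define L where "L = real (tree_diam D T)"
  have x0: "0 \<le> x" by (simp add: x_def)
  have hN: "real (nat \<bar>N\<bar>) = x" by (simp add: N_def x_def)
  have hM0: "0 \<le> real (nat \<bar>M\<bar>)" by simp
  have hM: "real (nat \<bar>M\<bar>) \<le> x + 1" by (simp add: M_def x_def)
  have hMM: "real (nat \<bar>M\<bar>) * real (nat \<bar>M\<bar>) \<le> (x + 1) * (x + 1)"
    by (rule mult_mono[OF hM hM]) (use hM0 x0 in auto)
  have hL: "real ?Lj = L * x" by (simp add: L_def x_def)
  have tr: "real tot = real kg + real ke + real kf + 6 * (L * x) + x * x
       + real (nat \<bar>M\<bar>) * real (nat \<bar>M\<bar>) + 2 * x + 2 * real (nat \<bar>M\<bar>)"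
    unfolding tot_def using hN hL by simp
  have "real tot \<le> (3 * K + 4) * \<bar>real_of_int n\<bar>^2 + (6 * real (tree_diam D T) + 6) * \<bar>real_of_int n\<bar> + 5"
  proof -
    have e1: "(3 * K + 4) * \<bar>real_of_int n\<bar>^2 = 3 * (K * \<bar>real_of_int n\<bar>^2) + 4 * (x * x)"
      by (simp add: x_def power2_eq_square algebra_simps)
    have e2: "(6 * real (tree_diam D T) + 6) * \<bar>real_of_int n\<bar> = 6 * (L * x) + 6 * x"
      by (simp add: x_def L_def algebra_simps)
    have e3: "(x + 1) * (x + 1) = x * x + 2 * x + 1" by (simp add: algebra_simps)
    have "0 \<le> x * x" by simp
    then show ?thesis unfolding e1 e2 tr using ke(2) kf(2) kg(2) hMM e3 hM by linarith
  qed
  with A show ?thesis by (meson ereal_less_eq(3) order_trans)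
qed

end
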